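(* Let $X\sim p^{\mathbb{Z}^d}$, $Y\sim q^{\mathbb{Z}^d}$ be i.i.d. processes over finite alphabets and let $\phi:X\to Y$ be a finitary homomorphism with $\mathbf{E}[R_\phi^{d/2}]<\infty$. Then there is a sequence $\delta_N\searrow0$ such that \[\mathbf{E}[|\mathcal{J}^c_{N,\lfloor\delta_N N\rfloor}|]=o(N^{d/2})\quad(N\to\infty).\]
   Context: A homomorphism $\phi:X\to Y$ is a measurable shift-commuting map $A^{\mathbb{Z}^d}\to B^{\mathbb{Z}^d}$ pushing $\mu=p^{\mathbb{Z}^d}$ to $\nu=q^{\mathbb{Z}^d}$. Its coding radius is $R_\phi(x)=\min\{n\in\mathbb{N}\cup\{\infty\}:\text{for }\mu\text{-a.e. }a,\ a|_{[-n,n]^d}=x|_{[-n,n]^d}\Rightarrow\phi(a)_0=\phi(x)_0\}$; finitary means $R_\phi<\infty$ a.s. Let $*\notin B$; for $n\in\mathbb{N}$ put $\phi^n_0(x)=\phi(x)_0$ if $R_\phi(x)\le n$ and $*$ otherwise (a.e. a function of $x|_{[-n,n]^d}$). For $\mathbb{T}_N^d=\mathbb{Z}^d/(N\mathbb{Z})^d$ and $N\ge2n+1$, define $\hat\phi^n:A^{\mathbb{T}_N^d}\to(B\cup\{*\})^{\mathbb{T}_N^d}$ by letting $\hat\phi^n(\hat x)_u$ be $\phi^n_0$ evaluated at the $N$-periodic extension of $T_{-u}\hat x$, where $(T_{-u}\hat x)_v=\hat x_{v+u}$. With $\hat X\sim p^{\mathbb{T}_N^d}$, $\mathcal{J}^c_{N,n}=\{u\in\mathbb{T}_N^d:\hat\phi^n(\hat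 X)_u=*\}$ (a random set). *)

theory Defs
  imports "HOL-Probability.Probability" "HOL-Library.Landau_Symbols"
begin

text \<open>Lattice points of Z^d are functions 'n => int for a finite type 'n, d = CARD('n).\<close>

definition origin :: "'n::finite \<Rightarrow> int" where
  "origin = (\<lambda>_. 0)"

definition box :: "nat \<Rightarrow> ('n::finite \<Rightarrow> int) set" where
  "box n = {v. \<forall>i. \<bar>v i\<bar> \<le> int n}"

definition torus :: "nat \<Rightarrow> ('n::finite \<Rightarrow> int) set" where
  "torus N = {u. \<forall>i. 0 \<le> u i \<and> u i < int N}"

definition iid :: "'a pmf \<Rightarrow> (('n::finite \<Rightarrow> int) \<Rightarrow> 'a) measure" where
  "iid p = PiM UNIV (\<lambda>_. measure_pmf p)"

definition shift :: "('n::finite \<Rightarrow> int) \<Rightarrow> (('n \<Rightarrow> int) \<Rightarrow> 'a) \<Rightarrow> (('n \<Rightarrow> int) \<Rightarrow> 'a)" where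
  "shift u x = (\<lambda>v. x (\<lambda>i. v i - u i))"

definition homomorphism ::
  "'a pmf \<Rightarrow> 'b pmf \<Rightarrow> ((('n::finite \<Rightarrow> int) \<Rightarrow> 'a) \<Rightarrow> (('n \<Rightarrow> int) \<Rightarrow> 'b)) \<Rightarrow> bool" where
  "homomorphism p q \<phi> \<longleftrightarrow>
     \<phi> \<in> iid p \<rightarrow>\<^sub>M iid q \<and>
     distr (iid p) (iid q) \<phi> = iid q \<and>
     (\<forall>u. AE x in iid p. \<phi> (shift u x) = shift u (\<phi> x))"

definition coding_radius ::
  "'a pmf \<Rightarrow> ((('n::finite \<Rightarrow> int) \<Rightarrow> 'a) \<Rightarrow> (('n \<Rightarrow> int) \<Rightarrow> 'b)) \<Rightarrow> (('n \<Rightarrow> int) \<Rightarrow> 'a) \<Rightarrow> enat" where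
  "coding_radius p \<phi> x =
     (let ok = (\<lambda>n::nat. AE a in iid p. (\<forall>v\<in>box n. a v = x v) \<longrightarrow> \<phi> a origin = \<phi> x origin)
      in if \<exists>n. ok n then enat (LEAST n. ok n) else \<infinity>)"

definition finitary ::
  "'a pmf \<Rightarrow> ((('n::finite \<Rightarrow> int) \<Rightarrow> 'a) \<Rightarrow> (('n \<Rightarrow> int) \<Rightarrow> 'b)) \<Rightarrow> bool" where
  "finitary p \<phi> \<longleftrightarrow> (AE x in iid p. coding_radius p \<phi> x < \<infinity>)"

text \<open>phi^n_0 : None plays the role of the extra symbol *.\<close>
definition trunc_code ::
  "'a pmf \<Rightarrow> ((('n::finite \<Rightarrow> int) \<Rightarrow> 'a) \<Rightarrow> (('n \<Rightarrow> int) \<Rightarrow> 'b)) \<Rightarrow> nat \<Rightarrow> (('n \<Rightarrow> int) \<Rightarrow> 'a) \<Rightarrow> 'b option" where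
  "trunc_code p \<phi> n x = (if coding_radius p \<phi> x \<le> enat n then Some (\<phi> x origin) else None)"

definition local_version ::
  "'a pmf \<Rightarrow> ((('n::finite \<Rightarrow> int) \<Rightarrow> 'a) \<Rightarrow> (('n \<Rightarrow> int) \<Rightarrow> 'b)) \<Rightarrow> nat \<Rightarrow> ((('n \<Rightarrow> int) \<Rightarrow> 'a) \<Rightarrow> 'b option) \<Rightarrow> bool" where
  "local_version p \<phi> n g \<longleftrightarrow>
     (\<forall>x y. (\<forall>v\<in>box n. x v = y v) \<longrightarrow> g x = g y) \<and>
     (AE x in iid p. g x = trunc_code p \<phi> n x)"

text \<open>The random set J^c_(N,n) on the torus: u such that hat-phi^n(hat x)_u = *.\<close>
definition Jc :: "((('n::finite \<Rightarrow> int) \<Rightarrow> 'a) \<Rightarrow> 'b option) \<Rightarrow> nat \<Rightarrow> (('n \<Rightarrow> int) \<Rightarrow> 'a) \<Rightarrow> ('n \<Rightarrow> int) set" where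
  "Jc g N xh = {u \<in> torus N. g (\<lambda>v. xh (\<lambda>i. (v i + u i) mod int N)) = None}"

definition torus_iid :: "'a pmf \<Rightarrow> nat \<Rightarrow> (('n::finite \<Rightarrow> int) \<Rightarrow> 'a) pmf" where
  "torus_iid p N = Pi_pmf (torus N) undefined (\<lambda>_. p)"

end

theory Submission
  imports Defs "HOL-Real_Asymp.Real_Asymp"
begin


lemma finite_box: "finite (box n :: ('n::finite \<Rightarrow> int) set)"
proof -
  have "box n \<subseteq> PiE (UNIV::'n set) (\<lambda>_. {-int n..int n})"
    by (auto simp: box_def abs_le_iff; smt (verit))
  moreover have "finite (PiE (UNIV::'n set) (\<lambda>_. {-int n..int n}))"
    by (intro finite_PiE) auto
  ultimately show ?thesis by (rule finite_subset)
qed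

lemma finite_torus: "finite (torus N :: ('n::finite \<Rightarrow> int) set)"
proof -
  have "torus N \<subseteq> PiE (UNIV::'n set) (\<lambda>_. {0..<int N})"
    by (auto simp: torus_def)
  moreover have "finite (PiE (UNIV::'n set) (\<lambda>_. {0..<int N}))"
    by (intro finite_PiE) auto
  ultimately show ?thesis by (rule finite_subset)
qed

lemma pps: "product_prob_space (\<lambda>_::'i. measure_pmf p)"
  unfolding product_prob_space_def product_prob_space_axioms_def product_sigma_finite_def
  by (auto intro: prob_space_measure_pmf prob_space_imp_sigma_finite)

lemma prob_iid: "prob_space (iid p)"
proof -
  interpret product_prob_space "\<lambda>_::'i. measure_pmf p" UNIV by (rule pps)
  show ?thesis unfolding iid_def by unfold_locales
qed

lemma space_iid[simp]: "space (iid p) = UNIV"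
  by (simp add: iid_def space_PiM)

lemma iid_cyl:
  fixes p :: "'a pmf" and z :: "('n::finite \<Rightarrow> int) \<Rightarrow> 'a"
  assumes J: "finite J"
  shows "{x. \<forall>v\<in>J. x v = z v} \<in> sets (iid p)"
    "measure (iid p) {x. \<forall>v\<in>J. x v = z v} = (\<Prod>v\<in>J. pmf p (z v))"
proof -
  interpret product_prob_space "\<lambda>_::('n \<Rightarrow> int). measure_pmf p" UNIV by (rule pps)
  have eq: "{x. \<forall>v\<in>J. x v = z v} = prod_emb UNIV (\<lambda>_. measure_pmf p) J (PiE J (\<lambda>v. {z v}))"
    by (auto simp: prod_emb_def PiE_iff restrict_def)
  show "{x. \<forall>v\<in>J. x v = z v} \<in> sets (iid p)"
    unfolding eq iid_def using J by (intro measurable_prod_emb sets_PiM_I_finite) auto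
  have "emeasure (iid p) {x. \<forall>v\<in>J. x v = z v} = (\<Prod>v\<in>J. emeasure (measure_pmf p) {z v})"
    unfolding eq iid_def using J by (intro emeasure_PiM_emb) auto
  also have "\<dots> = ennreal (\<Prod>v\<in>J. pmf p (z v))"
    by (simp add: emeasure_pmf_single prod_ennreal)
  finally show "measure (iid p) {x. \<forall>v\<in>J. x v = z v} = (\<Prod>v\<in>J. pmf p (z v))"
    by (simp add: measure_def prod_nonneg)
qed

lemma iid_local_event:
  fixes p :: "'a::finite pmf" and h :: "(('n::finite \<Rightarrow> int) \<Rightarrow> 'a) \<Rightarrow> bool"
  assumes loc: "\<And>x y. (\<forall>v\<in>box n. x v = y v) \<Longrightarrow> h x = h y"
  shows "{x. h x} \<in> sets (iid p)"
    "measure (iid p) {x. h x} = (\<Sum>z\<in>{z\<in>PiE (box n) (\<lambda>_. UNIV). h z}. \<Prod>v\<in>box n. pmf p (z v))"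
proof -
  interpret product_prob_space "\<lambda>_::('n \<Rightarrow> int). measure_pmf p" UNIV by (rule pps)
  define S where "S = {z\<in>PiE (box n) (\<lambda>_. UNIV::'a set). h z}"
  define C where "C z = {x. \<forall>v\<in>box n. x v = z v}" for z :: "('n \<Rightarrow> int) \<Rightarrow> 'a"
  have finS: "finite S" unfolding S_def
    by (rule finite_subset[of _ "PiE (box n) (\<lambda>_. UNIV::'a set)"]) (auto intro!: finite_PiE finite_box)
  have eq: "{x. h x} = (\<Union>z\<in>S. C z)"
  proof safe
    fix x assume "h x"
    then have "restrict x (box n) \<in> S" "x \<in> C (restrict x (box n))"
      using loc[of "restrict x (box n)" x] by (auto simp: S_def C_def)
    then show "x \<in> (\<Union>z\<in>S. C z)" by blast
  next
    fix x z assume "z \<in> S" "x \<in> C z"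
    then show "h x" using loc[of x z] by (auto simp: S_def C_def)
  qed
  have CS: "C z \<in> sets (iid p)" for z unfolding C_def by (rule iid_cyl(1)[OF finite_box])
  show "{x. h x} \<in> sets (iid p)" unfolding eq using finS CS by auto
  have disj: "disjoint_family_on C S"
    unfolding disjoint_family_on_def
  proof (intro ballI impI)
    fix z w assume zw: "z \<in> S" "w \<in> S" "z \<noteq> w"
    then have "\<exists>v\<in>box n. z v \<noteq> w v"
      by (auto simp: S_def PiE_iff extensional_def fun_eq_iff) (metis)
    then show "C z \<inter> C w = {}" by (auto simp: C_def)
  qed
  have "measure (iid p) {x. h x} = (\<Sum>z\<in>S. measure (iid p) (C z))"
    unfolding eq iid_def using finS CS disj
    by (intro P.finite_measure_finite_Union) (auto simp: iid_def)
  also have "\<dots> = (\<Sum>z\<in>S. \<Prod>v\<in>box n. pmf p (z v))"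
    unfolding C_def by (intro sum.cong refl iid_cyl(2)[OF finite_box])
  finally show "measure (iid p) {x. h x} = (\<Sum>z\<in>{z\<in>PiE (box n) (\<lambda>_. UNIV). h z}. \<Prod>v\<in>box n. pmf p (z v))"
    by (simp add: S_def)
qed

lemma shift_inj:
  fixes u v w :: "'n::finite \<Rightarrow> int"
  assumes "2 * n + 1 \<le> N" "v \<in> box n" "w \<in> box n"
    "(\<lambda>i. (v i + u i) mod int N) = (\<lambda>i. (w i + u i) mod int N)"
  shows "v = w"
proof
  fix i
  have "(v i + u i) mod int N = (w i + u i) mod int N" using assms(4) by meson
  then have d: "int N dvd (v i - w i)"
    by (metis mod_eq_dvd_iff diff_add_cancel add_diff_cancel_right)
  have "\<bar>v i - w i\<bar> \<le> 2 * int n" using assms(2,3) by (auto simp: box_def abs_le_iff; smt (verit))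
  then have "\<bar>v i - w i\<bar> < int N" using assms(1) by linarith
  then show "v i = w i" using d dvd_imp_le_int[OF _ d] by fastforce
qed

lemma torus_map:
  fixes p :: "'a pmf" and u :: "'n::finite \<Rightarrow> int"
  assumes nN: "2 * n + 1 \<le> N" and u: "u \<in> torus N"
  shows "map_pmf (\<lambda>xh v. if v \<in> box n then xh (\<lambda>i. (v i + u i) mod int N) else undefined) (torus_iid p N)
         = Pi_pmf (box n) undefined (\<lambda>_. p)"
proof -
  define \<sigma> where "\<sigma> v = (\<lambda>i. (v i + u i) mod int N)" for v :: "'n \<Rightarrow> int"
  define B where "B = \<sigma> ` box n"
  define hh where "hh v = (if v \<in> box n then \<sigma> v else (\<lambda>_. -1))" for v
  have Npos: "0 < N" using nN by simp
  have Bt: "B \<subseteq> torus N" using Npos by (auto simp: B_def \<sigma>_def torus_def)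
  have inj: "inj_on \<sigma> (box n)"
    unfolding inj_on_def \<sigma>_def using shift_inj[OF nN] by blast
  have bij: "bij_betw hh (box n) B"
  proof -
    have "bij_betw \<sigma> (box n) B" using inj by (simp add: B_def inj_on_imp_bij_betw)
    then show ?thesis by (rule bij_betw_cong[THEN iffD1, rotated]) (simp add: hh_def)
  qed
  have out: "hh x \<notin> B" if "x \<notin> box n" for x
    using that Bt by (auto simp: hh_def torus_def)
  have "Pi_pmf (box n) undefined (\<lambda>_. p) = map_pmf (\<lambda>g. g \<circ> hh) (Pi_pmf B undefined (\<lambda>_. p))"
    by (rule Pi_pmf_bij_betw[OF finite_box bij out])
  also have "Pi_pmf B undefined (\<lambda>_. p) = map_pmf (\<lambda>f x. if x \<in> B then f x else undefined) (torus_iid p N)"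
    unfolding torus_iid_def by (rule Pi_pmf_subset[OF finite_torus Bt])
  also have "map_pmf (\<lambda>g. g \<circ> hh) \<dots> = map_pmf (\<lambda>xh v. if v \<in> box n then xh (\<sigma> v) else undefined) (torus_iid p N)"
    unfolding map_pmf_comp
  proof (intro map_pmf_cong refl ext)
    fix f v
    show "((\<lambda>x. if x \<in> B then f x else undefined) \<circ> hh) v = (if v \<in> box n then f (\<sigma> v) else undefined)"
      using out[of v] by (auto simp: hh_def B_def)
  qed
  finally have eq: "Pi_pmf (box n) undefined (\<lambda>_. p) = map_pmf (\<lambda>xh v. if v \<in> box n then xh (\<sigma> v) else undefined) (torus_iid p N)" .
  show ?thesis using eq[unfolded \<sigma>_def] by simp
qed

lemma torus_local_event:
  fixes p :: "'a::finite pmf" and h :: "(('n::finite \<Rightarrow> int) \<Rightarrow> 'a) \<Rightarrow> bool"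
  assumes loc: "\<And>x y. (\<forall>v\<in>box n. x v = y v) \<Longrightarrow> h x = h y"
    and nN: "2 * n + 1 \<le> N" and u: "u \<in> torus N"
  shows "measure (torus_iid p N) {xh. h (\<lambda>v. xh (\<lambda>i. (v i + u i) mod int N))}
     = (\<Sum>z\<in>{z\<in>PiE (box n) (\<lambda>_. UNIV). h z}. \<Prod>v\<in>box n. pmf p (z v))"
proof -
  define Z where "Z xh = (\<lambda>v. if v \<in> box n then xh (\<lambda>i. (v i + u i) mod int N) else undefined)"
    for xh :: "('n \<Rightarrow> int) \<Rightarrow> 'a"
  define S where "S = {z\<in>PiE (box n) (\<lambda>_. UNIV::'a set). h z}"
  have finS: "finite S" unfolding S_def
    by (rule finite_subset[of _ "PiE (box n) (\<lambda>_. UNIV::'a set)"]) (auto intro!: finite_PiE finite_box)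
  have hZ: "h (\<lambda>v. xh (\<lambda>i. (v i + u i) mod int N)) = h (Z xh)" for xh
    by (rule loc) (simp add: Z_def)
  have "{xh. h (\<lambda>v. xh (\<lambda>i. (v i + u i) mod int N))} = Z -` {z. h z}"
    using hZ by auto
  then have "measure (torus_iid p N) {xh. h (\<lambda>v. xh (\<lambda>i. (v i + u i) mod int N))}
      = measure (Pi_pmf (box n) undefined (\<lambda>_. p)) {z. h z}"
    using torus_map[OF nN u, of p, folded Z_def] by (metis measure_map_pmf)
  also have "\<dots> = measure (Pi_pmf (box n) undefined (\<lambda>_. p)) S"
  proof -
    have "{z. h z} \<inter> set_pmf (Pi_pmf (box n) undefined (\<lambda>_. p)) = S \<inter> set_pmf (Pi_pmf (box n) undefined (\<lambda>_. p))"
      using set_Pi_pmf_subset[of "box n" undefined "\<lambda>_. p", OF finite_box]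
      by (auto simp: S_def PiE_iff extensional_def)
    then show ?thesis by (metis measure_Int_set_pmf)
  qed
  also have "\<dots> = (\<Sum>z\<in>S. pmf (Pi_pmf (box n) undefined (\<lambda>_. p)) z)"
    by (rule measure_measure_pmf_finite[OF finS])
  also have "\<dots> = (\<Sum>z\<in>S. \<Prod>v\<in>box n. pmf p (z v))"
    by (intro sum.cong refl) (auto simp: pmf_Pi[OF finite_box] S_def PiE_iff extensional_def)
  finally show ?thesis by (simp add: S_def)
qed

lemma expect_Jc:
  fixes p :: "'a::finite pmf" and G :: "(('n::finite \<Rightarrow> int) \<Rightarrow> 'a) \<Rightarrow> 'b option"
  assumes loc: "\<And>x y. (\<forall>v\<in>box n. x v = y v) \<Longrightarrow> G x = G y"
    and nN: "2 * n + 1 \<le> N"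
  shows "measure_pmf.expectation (torus_iid p N) (\<lambda>xh. real (card (Jc G N xh)))
       = real (card (torus N :: ('n \<Rightarrow> int) set)) * measure (iid p) {x. G x = None}"
proof -
  define E where "E u = {xh. G (\<lambda>v. xh (\<lambda>i. (v i + u i) mod int N)) = None}" for u :: "'n \<Rightarrow> int"
  have c: "real (card (Jc G N xh)) = (\<Sum>u\<in>torus N. indicator (E u) xh)" for xh
  proof -
    have "Jc G N xh = {u \<in> torus N. xh \<in> E u}" by (simp add: Jc_def E_def)
    moreover have "torus N \<inter> {u. xh \<in> E u} = {u \<in> torus N. xh \<in> E u}" by auto
    moreover have "(\<Sum>u\<in>torus N. of_bool (xh \<in> E u)) = (of_nat (card (torus N \<inter> {u. xh \<in> E u})) :: real)"
      using finite_torus[where 'n='n and N=N] by simp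
    ultimately show ?thesis by (simp add: indicator_def)
  qed
  have "measure_pmf.expectation (torus_iid p N) (\<lambda>xh. real (card (Jc G N xh)))
      = (\<Sum>u\<in>torus N. measure_pmf.expectation (torus_iid p N) (indicator (E u)))"
    unfolding c by (intro Bochner_Integration.integral_sum) (auto simp: measure_pmf.emeasure_finite less_top[symmetric])
  also have "\<dots> = (\<Sum>u::'n \<Rightarrow> int\<in>torus N. measure (iid p) {x. G x = None})"
  proof (intro sum.cong refl)
    fix u :: "'n \<Rightarrow> int" assume u: "u \<in> torus N"
    have loc': "\<And>x y. (\<forall>v\<in>box n. x v = y v) \<Longrightarrow> (G x = None) = (G y = None)"
      using loc by metis
    have "measure_pmf.expectation (torus_iid p N) (indicator (E u)) = measure (torus_iid p N) (E u)"
      by simp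
    also have "\<dots> = measure (iid p) {x. G x = None}"
      using torus_local_event[where h="\<lambda>x. G x = None" and p=p, OF loc' nN u] iid_local_event(2)[where h="\<lambda>x. G x = None" and p=p and n=n, OF loc'] by (simp add: E_def)
    finally show "measure_pmf.expectation (torus_iid p N) (indicator (E u)) = measure (iid p) {x. G x = None}" .
  qed
  finally show ?thesis by simp
qed



definition okc :: "'a pmf \<Rightarrow> ((('n::finite \<Rightarrow> int) \<Rightarrow> 'a) \<Rightarrow> (('n \<Rightarrow> int) \<Rightarrow> 'b)) \<Rightarrow> nat \<Rightarrow> (('n \<Rightarrow> int) \<Rightarrow> 'a) \<Rightarrow> bool" where
  "okc p \<phi> n x = (AE a in iid p. (\<forall>v\<in>box n. a v = x v) \<longrightarrow> \<phi> a origin = \<phi> x origin)"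

lemma box_mono: "n \<le> m \<Longrightarrow> box n \<subseteq> box m"
  unfolding box_def by (auto intro: order_trans[of _ "int n" "int m"])

lemma okc_mono: "okc p \<phi> n x \<Longrightarrow> n \<le> m \<Longrightarrow> okc p \<phi> m x"
  unfolding okc_def using box_mono[of n m] by (auto elim!: AE_mp)

lemma cr_def': "coding_radius p \<phi> x = (if \<exists>n. okc p \<phi> n x then enat (LEAST n. okc p \<phi> n x) else \<infinity>)"
  unfolding coding_radius_def okc_def Let_def ..

lemma cr_le: "coding_radius p \<phi> x \<le> enat n \<longleftrightarrow> okc p \<phi> n x"
proof
  assume "coding_radius p \<phi> x \<le> enat n"
  then have ex: "\<exists>n. okc p \<phi> n x" and le: "(LEAST n. okc p \<phi> n x) \<le> n"
    unfolding cr_def' by (auto split: if_splits)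
  from ex have "okc p \<phi> (LEAST n. okc p \<phi> n x) x" by (rule LeastI_ex)
  then show "okc p \<phi> n x" using le by (rule okc_mono)
next
  assume "okc p \<phi> n x"
  then show "coding_radius p \<phi> x \<le> enat n"
    unfolding cr_def' by (auto intro: Least_le)
qed

lemma cr_enat: "coding_radius p \<phi> x = enat k \<longleftrightarrow> okc p \<phi> k x \<and> (\<forall>j<k. \<not> okc p \<phi> j x)"
proof
  assume a: "coding_radius p \<phi> x = enat k"
  then have "okc p \<phi> k x" using cr_le[of p \<phi> x k] by simp
  moreover have "\<not> okc p \<phi> j x" if "j < k" for j
    using cr_le[of p \<phi> x j] a that by simp
  ultimately show "okc p \<phi> k x \<and> (\<forall>j<k. \<not> okc p \<phi> j x)" by blast
next
  assume a: "okc p \<phi> k x \<and> (\<forall>j<k. \<not> okc p \<phi> j x)"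
  then have "(LEAST n. okc p \<phi> n x) = k"
    by (intro Least_equality) (auto simp: not_less[symmetric])
  then show "coding_radius p \<phi> x = enat k" using a unfolding cr_def' by auto
qed

lemma cr_inf: "coding_radius p \<phi> x = \<infinity> \<longleftrightarrow> (\<forall>n. \<not> okc p \<phi> n x)"
  unfolding cr_def' by auto

lemma trunc_None: "trunc_code p \<phi> n x = None \<longleftrightarrow> \<not> okc p \<phi> n x"
  by (simp add: trunc_code_def cr_le)

lemma okc_sets:
  fixes p :: "'a::finite pmf" and \<phi> :: "(('n::finite \<Rightarrow> int) \<Rightarrow> 'a) \<Rightarrow> (('n \<Rightarrow> int) \<Rightarrow> 'b::finite)"
  assumes meas: "\<phi> \<in> iid p \<rightarrow>\<^sub>M iid q"
  shows "{x. okc p \<phi> n x} \<in> sets (iid p)"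
proof -
  define Q where "Q w b = (AE a in iid p. (\<forall>v\<in>box n. a v = w v) \<longrightarrow> \<phi> a origin = b)" for w b
  have m0: "(\<lambda>x. \<phi> x origin) \<in> iid p \<rightarrow>\<^sub>M measure_pmf q"
    unfolding iid_def by (rule measurable_compose[OF meas[unfolded iid_def] measurable_component_singleton]) simp
  have Bs: "{x. \<phi> x origin = b} \<in> sets (iid p)" for b
    using measurable_sets[OF m0, of "{b}"] by (simp add: vimage_def)
  have eq: "{x. okc p \<phi> n x} = (\<Union>w\<in>PiE (box n) (\<lambda>_. UNIV). \<Union>b\<in>UNIV.
      (if Q w b then {x. \<forall>v\<in>box n. x v = w v} \<inter> {x. \<phi> x origin = b} else {}))"
  proof safe
    fix x assume "okc p \<phi> n x"
    then have "Q (restrict x (box n)) (\<phi> x origin)" unfolding okc_def Q_def by simp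
    then show "x \<in> (\<Union>w\<in>PiE (box n) (\<lambda>_. UNIV). \<Union>b\<in>UNIV.
      (if Q w b then {x. \<forall>v\<in>box n. x v = w v} \<inter> {x. \<phi> x origin = b} else {}))"
      by (intro UN_I[of "restrict x (box n)"] UN_I[of "\<phi> x origin"]) auto
  next
    fix x w b assume "x \<in> (if Q w b then {x. \<forall>v\<in>box n. x v = w v} \<inter> {x. \<phi> x origin = b} else {})"
    then show "okc p \<phi> n x" unfolding okc_def Q_def by (auto split: if_splits)
  qed
  show ?thesis unfolding eq
    by (intro sets.finite_UN finite_PiE finite_box) (auto intro!: sets.Int iid_cyl(1) finite_box Bs)
qed

lemma cr_meas:
  fixes p :: "'a::finite pmf" and \<phi> :: "(('n::finite \<Rightarrow> int) \<Rightarrow> 'a) \<Rightarrow> (('n \<Rightarrow> int) \<Rightarrow> 'b::finite)"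
  assumes meas: "\<phi> \<in> iid p \<rightarrow>\<^sub>M iid q"
  shows "coding_radius p \<phi> \<in> iid p \<rightarrow>\<^sub>M count_space UNIV"
proof -
  have "coding_radius p \<phi> -` {a} \<in> sets (iid p)" for a
  proof (cases a)
    case (enat k)
    have "coding_radius p \<phi> -` {a} = {x. okc p \<phi> k x} \<inter> (\<Inter>j\<in>{..<k}. - {x. okc p \<phi> j x})"
      using enat cr_enat[of p \<phi> _ k] by auto
    then show ?thesis
      using okc_sets[OF meas] by (auto intro!: sets.Int sets.finite_INT sets.compl_sets simp del: Compl_eq)
  next
    case infinity
    have "coding_radius p \<phi> -` {a} = space (iid p) - (\<Union>j. {x. okc p \<phi> j x})"
      using infinity cr_inf[of p \<phi>] by auto
    moreover have "(\<Union>j. {x. okc p \<phi> j x}) \<in> sets (iid p)"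
      using okc_sets[OF meas] by (intro sets.countable_UN) auto
    moreover have "space (iid p) - (\<Union>j. {x. okc p \<phi> j x}) \<in> sets (iid p)"
      using calculation(2) by (rule sets.compl_sets)
    ultimately show ?thesis by simp
  qed
  then show ?thesis by (subst measurable_count_space_eq2_countable) auto
qed



lemma tail_lemma:
  fixes p :: "'a::finite pmf" and q :: "'b::finite pmf"
    and \<phi> :: "(('n::finite \<Rightarrow> int) \<Rightarrow> 'a) \<Rightarrow> (('n \<Rightarrow> int) \<Rightarrow> 'b)"
  assumes meas: "\<phi> \<in> iid p \<rightarrow>\<^sub>M iid q"
    and fin: "finitary p \<phi>"
    and moment: "(\<integral>\<^sup>+ x. (case coding_radius p \<phi> x of
                    enat r \<Rightarrow> ennreal (real r powr (real CARD('n) / 2)) | \<infinity> \<Rightarrow> \<infinity>) \<partial>iid p) < \<infinity>"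
  shows "\<exists>H::nat\<Rightarrow>real. (\<forall>m. 0 \<le> H m) \<and> (\<forall>m m'. m \<le> m' \<longrightarrow> H m' \<le> H m) \<and> H \<longlonglongrightarrow> 0 \<and>
     (\<forall>m. real m powr (real CARD('n) / 2) * measure (iid p) {x. \<not> okc p \<phi> m x} \<le> H m)"
proof -
  interpret P: prob_space "iid p :: (('n \<Rightarrow> int) \<Rightarrow> 'a) measure" by (rule prob_iid)
  define a where "a = real CARD('n) / 2"
  have a0: "0 \<le> a" by (simp add: a_def)
  define f where "f e = (case e of enat r \<Rightarrow> real r powr a | \<infinity> \<Rightarrow> 0)" for e :: enat
  define F where "F x = f (coding_radius p \<phi> x)" for x
  define S where "S m = {x. \<not> okc p \<phi> m x}" for m
  define H where "H m = (\<integral>x. F x * indicator (S m) x \<partial>iid p)" for m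
  have F0: "0 \<le> F x" for x by (auto simp: F_def f_def split: enat.splits)
  have Fm: "F \<in> borel_measurable (iid p)"
    unfolding F_def by (rule measurable_compose[OF cr_meas[OF meas]]) simp
  have "(\<integral>\<^sup>+ x. ennreal (F x) \<partial>iid p) \<le> (\<integral>\<^sup>+ x. (case coding_radius p \<phi> x of
                    enat r \<Rightarrow> ennreal (real r powr (real CARD('n) / 2)) | \<infinity> \<Rightarrow> \<infinity>) \<partial>iid p)"
    by (intro nn_integral_mono) (auto simp: F_def f_def a_def split: enat.splits)
  then have Fint: "integrable (iid p) F"
    using moment by (intro integrableI_nonneg[OF Fm]) (auto simp: F0)
  have Ss: "S m \<in> sets (iid p)" for m
  proof -
    have "S m = space (iid p) - {x. okc p \<phi> m x}" by (auto simp: S_def)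
    then show ?thesis using okc_sets[OF meas, of n] by (metis okc_sets[OF meas] sets.compl_sets)
  qed
  have sint: "integrable (iid p) (\<lambda>x. F x * indicator (S m) x)" for m
    by (rule integrable_real_mult_indicator[OF Ss Fint])
  have AEfin: "AE x in iid p. coding_radius p \<phi> x < \<infinity>"
    using fin by (simp add: finitary_def)
  have "0 \<le> H m" for m unfolding H_def by (intro integral_nonneg_AE) (auto simp: F0)
  moreover have "H m' \<le> H m" if "m \<le> m'" for m m'
    unfolding H_def
  proof (intro integral_mono sint)
    fix x
    have "x \<in> S m' \<Longrightarrow> x \<in> S m" using okc_mono[of p \<phi> m x m'] that by (auto simp: S_def)
    then show "F x * indicator (S m') x \<le> F x * indicator (S m) x"
      using F0[of x] by (auto simp: indicator_def)
  qed
  moreover have "H \<longlonglongrightarrow> 0"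
  proof -
    have "(\<lambda>m. H m) \<longlonglongrightarrow> (\<integral>x. (0::real) \<partial>(iid p :: ((('n \<Rightarrow> int) \<Rightarrow> 'a) measure)))"
      unfolding H_def
    proof (rule integral_dominated_convergence[where w=F])
      show "(\<lambda>x. 0::real) \<in> borel_measurable (iid p)" by simp
      show "(\<lambda>x. F x * indicator (S m) x) \<in> borel_measurable (iid p)" for m
        using sint[of m] by auto
      show "integrable (iid p) F" by (rule Fint)
      show "AE x in iid p. norm (F x * indicator (S m) x) \<le> F x" for m
        using F0 by (auto simp: indicator_def)
      show "AE x in iid p. (\<lambda>m. F x * indicator (S m) x) \<longlonglongrightarrow> 0"
        using AEfin
      proof eventually_elim
        case (elim x)
        then obtain r where r: "coding_radius p \<phi> x = enat r" by (cases "coding_radius p \<phi> x") auto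
        have "eventually (\<lambda>m. F x * indicator (S m) x = 0) sequentially"
          unfolding eventually_sequentially
        proof (intro exI allI impI)
          fix m assume "r \<le> m"
          then have "okc p \<phi> m x" using cr_le[of p \<phi> x m] r by simp
          then show "F x * indicator (S m) x = 0" by (simp add: S_def)
        qed
        then show ?case by (rule tendsto_eventually)
      qed
    qed
    then show ?thesis by simp
  qed
  moreover have "real m powr a * measure (iid p) (S m) \<le> H m" for m
  proof -
    have "real m powr a * measure (iid p) (S m) = (\<integral>x. real m powr a * indicator (S m) x \<partial>iid p)"
      using Ss[of m] by simp
    also have "\<dots> \<le> H m"
      unfolding H_def
    proof (intro integral_mono_AE sint)
      show "integrable (iid p) (\<lambda>x. real m powr a * indicator (S m) x)"
        using Ss[of m] P.emeasure_finite by (intro integrable_mult_right) (auto simp: less_top[symmetric])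
      show "AE x in iid p. real m powr a * indicator (S m) x \<le> F x * indicator (S m) x"
        using AEfin
      proof eventually_elim
        case (elim x)
        then obtain r where r: "coding_radius p \<phi> x = enat r" by (cases "coding_radius p \<phi> x") auto
        show ?case
        proof (cases "x \<in> S m")
          case True
          then have "\<not> okc p \<phi> m x" by (simp add: S_def)
          then have "m \<le> r" using cr_le[of p \<phi> x m] r by simp
          then have "real m powr a \<le> real r powr a" using a0 by (intro powr_mono2) auto
          then show ?thesis using True r by (simp add: F_def f_def)
        qed simp
      qed
    qed
    finally show ?thesis .
  qed
  ultimately show ?thesis unfolding S_def a_def by blast
qed



lemma g_mono: "M \<le> N \<Longrightarrow> real M / sqrt (real M + 1) \<le> real N / sqrt (real N + 1)"
proof -
  assume MN: "M \<le> N"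
  have "real M * sqrt (real N + 1) \<le> real N * sqrt (real M + 1)"
  proof -
    have "(real M * sqrt (real N + 1))^2 \<le> (real N * sqrt (real M + 1))^2"
    proof -
      have h1: "M * M * N \<le> N * N * M"
      proof -
        have "M * M * N = (M * N) * M" by simp
        also have "\<dots> \<le> (M * N) * N" using MN by simp
        also have "\<dots> = N * N * M" by simp
        finally show ?thesis .
      qed
      have h2: "M * M \<le> N * N" using MN by (simp add: mult_le_mono)
      have "M * M * (N + 1) = M * M * N + M * M" by (simp add: algebra_simps)
      also have "\<dots> \<le> N * N * M + N * N" using h1 h2 by (rule add_mono)
      also have "\<dots> = N * N * (M + 1)" by (simp add: algebra_simps)
      finally have "M * M * (N + 1) \<le> N * N * (M + 1)" .
      then have "real (M * M * (N + 1)) \<le> real (N * N * (M + 1))" by (simp only: of_nat_le_iff)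
      then have "(real M)^2 * (real N + 1) \<le> (real N)^2 * (real M + 1)"
        by (simp only: power2_eq_square of_nat_mult of_nat_add of_nat_1)
      then show ?thesis by (simp add: power_mult_distrib)
    qed
    then show ?thesis by (rule power2_le_imp_le) simp
  qed
  then show ?thesis by (simp add: divide_simps)
qed

lemma analytic:
  fixes H T :: "nat \<Rightarrow> real" and a :: real
  assumes a: "0 < a" and H0: "\<And>m. 0 \<le> H m" and Hmono: "\<And>m m'. m \<le> m' \<Longrightarrow> H m' \<le> H m"
    and Hlim: "H \<longlonglongrightarrow> 0" and T0: "\<And>m. 0 \<le> T m"
    and TH: "\<And>m. real m powr a * T m \<le> H m"
  shows "\<exists>\<delta>::nat\<Rightarrow>real. (\<forall>N. 0 < \<delta> N) \<and> decseq \<delta> \<and> \<delta> \<longlonglongrightarrow> 0 \<and>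
     eventually (\<lambda>N. 2 * nat \<lfloor>\<delta> N * real N\<rfloor> + 1 \<le> N) sequentially \<and>
     (\<lambda>N. real N powr a * T (nat \<lfloor>\<delta> N * real N\<rfloor>)) \<longlonglongrightarrow> 0"
proof -
  define l where "l N = 1 / sqrt (real N + 1)" for N :: nat
  define gg where "gg N = real N / sqrt (real N + 1)" for N :: nat
  define k where "k N = nat \<lfloor>gg N\<rfloor>" for N
  define c where "c N = H (k N) powr (1 / (2 * a))" for N
  define \<delta> where "\<delta> N = max (c N) (l N)" for N
  have lpos: "0 < l N" for N by (simp add: l_def)
  have gg_l: "gg N = real N * l N" for N by (simp add: gg_def l_def)
  have lmono: "l N \<le> l M" if "M \<le> N" for M N
    using that by (simp add: l_def divide_simps)
  have llim: "l \<longlonglongrightarrow> 0" unfolding l_def by real_asymp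
  have gglim: "filterlim gg at_top sequentially" unfolding gg_def by real_asymp
  have klim: "filterlim k at_top sequentially"
    unfolding k_def
    by (rule filterlim_compose[OF filterlim_nat_sequentially filterlim_compose[OF filterlim_floor_sequentially gglim]])
  have kmono: "k M \<le> k N" if "M \<le> N" for M N
    unfolding k_def gg_def using g_mono[OF that] by (intro nat_mono floor_mono)
  have c0: "0 \<le> c N" for N by (simp add: c_def)
  have cmono: "c N \<le> c M" if "M \<le> N" for M N
    unfolding c_def using a H0 Hmono[OF kmono[OF that]] by (intro powr_mono2) auto
  have Hk: "(\<lambda>N. H (k N)) \<longlonglongrightarrow> 0" by (rule filterlim_compose[OF Hlim klim])
  have clim: "c \<longlonglongrightarrow> 0"
    unfolding c_def using a H0 by (intro tendsto_zero_powrI[OF Hk tendsto_const]) auto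
  have dpos: "\<forall>N. 0 < \<delta> N" using lpos by (simp add: \<delta>_def max.strict_coboundedI2)
  have ddec: "decseq \<delta>"
    unfolding decseq_def \<delta>_def by (intro allI impI max.mono) (auto intro: cmono lmono)
  have dlim: "\<delta> \<longlonglongrightarrow> 0"
    unfolding \<delta>_def using tendsto_max[OF clim llim] by simp
  have ev1: "eventually (\<lambda>N. \<delta> N \<le> 1/4) sequentially"
    using order_tendstoD(2)[OF dlim, of "1/4"] by (auto elim: eventually_mono)
  have ev2: "eventually (\<lambda>N. 1 \<le> k N) sequentially"
    using klim by (simp add: filterlim_at_top)
  have ev3: "eventually (\<lambda>N. 2 \<le> N) sequentially" by (rule eventually_ge_at_top)
  have evn: "eventually (\<lambda>N. 2 * nat \<lfloor>\<delta> N * real N\<rfloor> + 1 \<le> N) sequentially"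
    using ev1 ev3
  proof eventually_elim
    case (elim N)
    have "real_of_int \<lfloor>\<delta> N * real N\<rfloor> \<le> \<delta> N * real N" by simp
    also have "\<dots> \<le> real N / 4" using elim by (simp add: mult_right_mono)
    finally have "real (nat \<lfloor>\<delta> N * real N\<rfloor>) \<le> real N / 4"
      using dpos by (metis mult_nonneg_nonneg less_imp_le of_nat_0_le_iff of_nat_nat zero_le_floor)
    then show ?case using elim by linarith
  qed
  have bound: "eventually (\<lambda>N. real N powr a * T (nat \<lfloor>\<delta> N * real N\<rfloor>) \<le> 2 powr a * sqrt (H (k N))) sequentially"
    using ev2
  proof eventually_elim
    case (elim N)
    define y where "y = \<delta> N * real N"
    define n where "n = nat \<lfloor>y\<rfloor>"
    have "gg N \<le> y" unfolding y_def gg_l \<delta>_def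
      by (subst mult.commute) (intro mult_left_mono max.cobounded2, simp)
    then have "k N \<le> n" unfolding k_def n_def by (intro nat_mono floor_mono)
    then have n1: "1 \<le> n" using elim by simp
    then have fy: "1 \<le> \<lfloor>y\<rfloor>" unfolding n_def by linarith
    have ny: "real n \<le> y" "y < real n + 1" unfolding n_def using fy by linarith+
    have y2n: "y \<le> 2 * real n" using ny n1 by linarith
    have Npos: "0 < real N"
    proof (rule ccontr)
      assume "\<not> 0 < real N" then have "y = 0" by (simp add: y_def)
      then show False using ny n1 by simp
    qed
    have dN: "\<delta> N = y / real N" using Npos by (simp add: y_def)
    have npos: "0 < real n" using n1 by simp
    have "real n powr a * T n \<le> H n" by (rule TH)
    then have Tn: "T n \<le> H n / real n powr a" using npos by (simp add: field_simps)
    have "H n / real n powr a \<le> H (k N) / real n powr a"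
      using Hmono[OF \<open>k N \<le> n\<close>] npos by (intro divide_right_mono) auto
    then have "T n \<le> H (k N) / real n powr a" using Tn by linarith
    then have "real N powr a * T n \<le> real N powr a * (H (k N) / real n powr a)"
      by (intro mult_left_mono) auto
    also have "\<dots> = (real N / real n) powr a * H (k N)"
      by (simp add: powr_divide)
    also have "\<dots> \<le> (2 / \<delta> N) powr a * H (k N)"
    proof (intro mult_right_mono powr_mono2)
      show "real N / real n \<le> 2 / \<delta> N"
        unfolding dN using Npos npos y2n ny by (simp add: field_simps)
    qed (use a H0 Npos npos in auto)
    also have "\<dots> = 2 powr a * (H (k N) / \<delta> N powr a)"
      using dpos by (simp add: powr_divide)
    also have "\<dots> \<le> 2 powr a * sqrt (H (k N))"
    proof (intro mult_left_mono)
      have "sqrt (H (k N)) = c N powr a"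
        unfolding c_def using a H0 by (simp add: powr_powr powr_half_sqrt[symmetric])
      also have "\<dots> \<le> \<delta> N powr a"
        using a c0 by (intro powr_mono2) (auto simp: \<delta>_def)
      finally have sd: "sqrt (H (k N)) \<le> \<delta> N powr a" .
      have dp: "0 < \<delta> N powr a" using dpos by (metis powr_gt_zero less_irrefl)
      have "H (k N) = sqrt (H (k N)) * sqrt (H (k N))" using H0 by simp
      also have "\<dots> \<le> \<delta> N powr a * sqrt (H (k N))"
        using sd H0 by (intro mult_right_mono) auto
      finally show "H (k N) / \<delta> N powr a \<le> sqrt (H (k N))"
        using dp by (simp add: divide_simps mult.commute)
    qed simp
    finally show ?case by (simp add: y_def n_def)
  qed
  have lim0: "(\<lambda>N. 2 powr a * sqrt (H (k N))) \<longlonglongrightarrow> 0"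
    using tendsto_mult_right_zero[of "\<lambda>N. sqrt (H (k N))" sequentially "2 powr a"] tendsto_real_sqrt[OF Hk] by simp
  have "(\<lambda>N. real N powr a * T (nat \<lfloor>\<delta> N * real N\<rfloor>)) \<longlonglongrightarrow> 0"
    by (rule tendsto_sandwich[OF _ bound tendsto_const lim0]) (auto intro!: always_eventually mult_nonneg_nonneg T0)
  with dpos ddec dlim evn show ?thesis by blast
qed



lemma card_torus: "card (torus N :: ('n::finite \<Rightarrow> int) set) = N ^ CARD('n)"
proof -
  have "torus N = PiE (UNIV::'n set) (\<lambda>_. {0..<int N})"
    by (auto simp: torus_def PiE_iff)
  then show ?thesis by (simp add: card_PiE)
qed

theorem corollary7:
  fixes p :: "'a::finite pmf" and q :: "'b::finite pmf"
    and \<phi> :: "(('n::finite \<Rightarrow> int) \<Rightarrow> 'a) \<Rightarrow> (('n \<Rightarrow> int) \<Rightarrow> 'b)"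
    and g :: "nat \<Rightarrow> (('n \<Rightarrow> int) \<Rightarrow> 'a) \<Rightarrow> 'b option"
  assumes hom: "homomorphism p q \<phi>"
    and fin: "finitary p \<phi>"
    and moment: "(\<integral>\<^sup>+ x. (case coding_radius p \<phi> x of
                    enat r \<Rightarrow> ennreal (real r powr (real CARD('n) / 2)) | \<infinity> \<Rightarrow> \<infinity>) \<partial>iid p) < \<infinity>"
    and versions: "\<And>n. local_version p \<phi> n (g n)"
  shows "\<exists>\<delta> :: nat \<Rightarrow> real. (\<forall>N. 0 < \<delta> N) \<and> decseq \<delta> \<and> \<delta> \<longlonglongrightarrow> 0 \<and>
           (\<lambda>N. measure_pmf.expectation (torus_iid p N)
                  (\<lambda>xh. real (card (Jc (g (nat \<lfloor>\<delta> N * real N\<rfloor>)) N xh))))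
             \<in> o(\<lambda>N. real N powr (real CARD('n) / 2))"
proof -
  have meas: "\<phi> \<in> iid p \<rightarrow>\<^sub>M iid q" using hom by (simp add: homomorphism_def)
  define a where "a = real CARD('n) / 2"
  have a0: "0 < a" by (simp add: a_def)
  define T where "T m = measure (iid p) {x. \<not> okc p \<phi> m x}" for m
  obtain H :: "nat \<Rightarrow> real" where H0: "\<forall>m. 0 \<le> H m" and Hm: "\<forall>m m'. m \<le> m' \<longrightarrow> H m' \<le> H m"
    and Hl: "H \<longlonglongrightarrow> 0" and TH: "\<forall>m. real m powr a * T m \<le> H m"
    using tail_lemma[OF meas fin moment] unfolding a_def T_def by blast
  obtain \<delta> :: "nat \<Rightarrow> real" where dpos: "\<forall>N. 0 < \<delta> N" and ddec: "decseq \<delta>" and dlim: "\<delta> \<longlonglongrightarrow> 0"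
    and evn: "eventually (\<lambda>N. 2 * nat \<lfloor>\<delta> N * real N\<rfloor> + 1 \<le> N) sequentially"
    and lim: "(\<lambda>N. real N powr a * T (nat \<lfloor>\<delta> N * real N\<rfloor>)) \<longlonglongrightarrow> 0"
    using analytic[OF a0, of H T] H0 Hm Hl TH by (auto simp: T_def)
  have loc: "\<And>x y. (\<forall>v\<in>box n. x v = y v) \<Longrightarrow> g n x = g n y" for n
    using versions[of n] by (simp add: local_version_def)
  have Tg: "measure (iid p) {x. g n x = None} = T n" for n
  proof -
    have loc': "\<And>x y. (\<forall>v\<in>box n. x v = y v) \<Longrightarrow> (g n x = None) = (g n y = None)"
      using loc by metis
    have s1: "{x. g n x = None} \<in> sets (iid p)"
      by (rule iid_local_event(1)[where h="\<lambda>x. g n x = None" and p=p and n=n, OF loc'])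
    have s2: "{x. \<not> okc p \<phi> n x} \<in> sets (iid p)"
    proof -
      have "{x. \<not> okc p \<phi> n x} = space (iid p) - {x. okc p \<phi> n x}" by auto
      then show ?thesis using okc_sets[OF meas, of n] by (metis sets.compl_sets)
    qed
    have "AE x in iid p. g n x = trunc_code p \<phi> n x"
      using versions[of n] by (simp add: local_version_def)
    then have "AE x in iid p. (x \<in> {x. g n x = None}) = (x \<in> {x. \<not> okc p \<phi> n x})"
      by eventually_elim (simp add: trunc_None)
    then show ?thesis unfolding T_def by (rule measure_eq_AE[OF _ s1 s2])
  qed
  define E where "E N = measure_pmf.expectation (torus_iid p N)
                  (\<lambda>xh. real (card (Jc (g (nat \<lfloor>\<delta> N * real N\<rfloor>)) N xh)))" for N
  have evE: "eventually (\<lambda>N. real N powr a * T (nat \<lfloor>\<delta> N * real N\<rfloor>) = E N / real N powr a) sequentially"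
    using evn eventually_ge_at_top[of 1]
  proof eventually_elim
    case (elim N)
    have "E N = real (card (torus N :: ('n \<Rightarrow> int) set)) * measure (iid p) {x. g (nat \<lfloor>\<delta> N * real N\<rfloor>) x = None}"
      unfolding E_def by (rule expect_Jc[OF loc elim(1)])
    also have "\<dots> = real N ^ CARD('n) * T (nat \<lfloor>\<delta> N * real N\<rfloor>)"
      by (simp add: card_torus Tg)
    also have "real N ^ CARD('n) = real N powr a * real N powr a"
      using elim(2) by (simp add: powr_realpow[symmetric] powr_add[symmetric] a_def)
    finally show ?case using elim(2) by (simp add: field_simps)
  qed
  have "(\<lambda>N. E N / real N powr a) \<longlonglongrightarrow> 0"
    by (rule Lim_transform_eventually[OF lim evE])
  then have "E \<in> o(\<lambda>N. real N powr a)"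
    by (rule smalloI_tendsto) (use eventually_ge_at_top[of 1] in \<open>auto elim: eventually_mono\<close>)
  then show ?thesis using dpos ddec dlim unfolding E_def a_def by blast
qed

end
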